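(* Let $(X,\mathcal{A})$ be a cross resolvable design with $r$ parallel classes and $b_r$ blocks per parallel class, and let $z\in\{2,\dots,r\}$ be such that $\mu_z$ exists. In the multi-access coded caching scheme described in the context, with distinct demands, at the end of all transmissions of the delivery phase every user $m$ can recover all subfiles of its demanded file $W_{d_m}$ (using the transmissions and the contents of the caches it is connected to).
   Context: A resolvable design $(X,\mathcal{A})$: $X$ a finite set of $v$ points, $\mathcal{A}$ a collection of $b$ blocks each of size $k$, partitioned into $r$ parallel classes, each being a set of $b_r=v/k$ pairwise disjoint blocks with union $X$. $\mu_z$ exists if $|B_1\cap\cdots\cap B_z|$ equals the same nonzero value $\mu_z$ for every choice of blocks from $z$ distinct parallel classes. Users: one user $U_H$ for each set $H$ of $z$ blocks from $z$ distinct parallel classes, connected to the caches of those blocks (one cache per block). Placement: each file $W_i$ ($i\in[N]$) is split into subfiles $W_{i,x}$, $x\in X$; the cache of block $A_j$ stores $W_{i,x}$ for $x\in A_j$ and all $i$. Delivery: user $m$ demands $W_{d_m}$. For each choice of $z$ parallel classes $\mathcal{P}_1,\dots,\mathcal{P}_z$ and each choice of a pair of distinct blocks $\{C_{s,i_s},C_{s,j_s}\}\subseteq\mathcal{P}_s$ for every $s\in[z]$, let $\mathcal{X}$ be the $2^z$ users whose caches consist of one block from each chosen pair; for $m\in\mathcal{X}$ connected to $C_{1,a_1},\dots,C_{z,a_z}$, with $e_s$ the other index of $\{i_s,j_s\}$, put $f_m=C_{1,e_1}\cap\cdots\cap C_{z,e_z}=\{y_{m,1},\dots,y_{m,\mu_z}\}$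 (fixed ordering), and broadcast $\bigoplus_{m\in\mathcal{X}}W_{d_m,y_{m,s}}$ for each $s\in[\mu_z]$. *)

theory Defs
  imports Main "HOL-Library.FuncSet"
begin

text \<open>Blocks are indexed: C j l is the l-th block (l < br) of the j-th parallel class (j < r).\<close>

definition resolvable_design ::
  "'a set \<Rightarrow> (nat \<Rightarrow> nat \<Rightarrow> 'a set) \<Rightarrow> nat \<Rightarrow> nat \<Rightarrow> nat \<Rightarrow> bool" where
  "resolvable_design X C k r br \<longleftrightarrow>
     finite X \<and> X \<noteq> {} \<and> k > 0 \<and> r > 0 \<and>
     (\<forall>j<r. \<forall>l<br. C j l \<subseteq> X \<and> card (C j l) = k) \<and>
     (\<forall>j<r. (\<forall>l<br. \<forall>l'<br. l \<noteq> l' \<longrightarrow> C j l \<inter> C j l' = {}) \<and>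
            (\<Union>l<br. C j l) = X)"

text \<open>mu_z exists and equals mu: every intersection of blocks from z distinct classes
  has cardinality mu > 0.\<close>
definition mu_z_eq ::
  "(nat \<Rightarrow> nat \<Rightarrow> 'a set) \<Rightarrow> nat \<Rightarrow> nat \<Rightarrow> nat \<Rightarrow> nat \<Rightarrow> bool" where
  "mu_z_eq C r br z mu \<longleftrightarrow> mu > 0 \<and>
     (\<forall>S u. S \<subseteq> {..<r} \<and> card S = z \<and> u \<in> (S \<rightarrow>\<^sub>E {..<br}) \<longrightarrow>
        card (\<Inter>j\<in>S. C j (u j)) = mu)"

definition cross_resolvable_design ::
  "'a set \<Rightarrow> (nat \<Rightarrow> nat \<Rightarrow> 'a set) \<Rightarrow> nat \<Rightarrow> nat \<Rightarrow> nat \<Rightarrow> bool" where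
  "cross_resolvable_design X C k r br \<longleftrightarrow> resolvable_design X C k r br \<and>
     (\<exists>z\<in>{2..r}. \<exists>mu. mu_z_eq C r br z mu)"

text \<open>A user is (S, u): the set S of z parallel classes and the choice u j of a block
  in each class j \<in> S.\<close>
definition users :: "nat \<Rightarrow> nat \<Rightarrow> nat \<Rightarrow> (nat set \<times> (nat \<Rightarrow> nat)) set" where
  "users r br z = {(S, u). S \<subseteq> {..<r} \<and> card S = z \<and> u \<in> (S \<rightarrow>\<^sub>E {..<br})}"

text \<open>Points whose subfiles are available in the caches a user is connected to.\<close>
definition cached_points ::
  "(nat \<Rightarrow> nat \<Rightarrow> 'a set) \<Rightarrow> nat set \<times> (nat \<Rightarrow> nat) \<Rightarrow> 'a set" where
  "cached_points C m = (\<Union>j\<in>fst m. C j (snd m j))"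

definition groups ::
  "nat \<Rightarrow> nat \<Rightarrow> nat \<Rightarrow> (nat set \<times> (nat \<Rightarrow> nat) \<times> (nat \<Rightarrow> nat)) set" where
  "groups r br z = {(S, a, b). S \<subseteq> {..<r} \<and> card S = z \<and>
      a \<in> (S \<rightarrow>\<^sub>E {..<br}) \<and> b \<in> (S \<rightarrow>\<^sub>E {..<br}) \<and> (\<forall>j\<in>S. a j \<noteq> b j)}"

definition group_choices :: "nat set \<Rightarrow> (nat \<Rightarrow> nat) \<Rightarrow> (nat \<Rightarrow> nat) \<Rightarrow> (nat \<Rightarrow> nat) set" where
  "group_choices S a b = PiE S (\<lambda>j. {a j, b j})"

definition f_set ::
  "(nat \<Rightarrow> nat \<Rightarrow> 'a set) \<Rightarrow> nat set \<Rightarrow> (nat \<Rightarrow> nat) \<Rightarrow> (nat \<Rightarrow> nat) \<Rightarrow> (nat \<Rightarrow> nat) \<Rightarrow> 'a set" where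
  "f_set C S a b u = (\<Inter>j\<in>S. C j (if u j = a j then b j else a j))"

text \<open>The s-th transmission (0-based s < mu) of a group; ord gives the fixed ordering
  y_{m,1},...,y_{m,mu} of each set f_m; XOR is the group addition.\<close>
definition transmission ::
  "(nat \<Rightarrow> nat \<Rightarrow> 'a set) \<Rightarrow> ('a set \<Rightarrow> 'a list) \<Rightarrow> (nat set \<times> (nat \<Rightarrow> nat) \<Rightarrow> nat)
    \<Rightarrow> (nat \<Rightarrow> 'a \<Rightarrow> 'v::ab_group_add) \<Rightarrow> nat set \<Rightarrow> (nat \<Rightarrow> nat) \<Rightarrow> (nat \<Rightarrow> nat) \<Rightarrow> nat \<Rightarrow> 'v" where
  "transmission C ord d W S a b s =
     (\<Sum>u\<in>group_choices S a b. W (d (S, u)) (ord (f_set C S a b u) ! s))"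

end

theory Submission
  imports Defs
begin

theorem lemma8:
  fixes X :: "'a set" and C :: "nat \<Rightarrow> nat \<Rightarrow> 'a set"
    and k r br z mu N :: nat
    and ord :: "'a set \<Rightarrow> 'a list"
    and d :: "nat set \<times> (nat \<Rightarrow> nat) \<Rightarrow> nat"
  assumes crd: "cross_resolvable_design X C k r br"
    and z: "2 \<le> z" "z \<le> r"
    and mu: "mu_z_eq C r br z mu"
    and ord: "\<And>A. finite A \<Longrightarrow> distinct (ord A) \<and> set (ord A) = A"
    and demands: "d ` users r br z \<subseteq> {1..N}"
    and distinct_demands: "inj_on d (users r br z)"
    and xor: "\<And>x::'v::ab_group_add. x + x = 0"
  shows "\<forall>m\<in>users r br z. \<forall>(W::nat \<Rightarrow> 'a \<Rightarrow> 'v) W'.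
           (\<forall>i\<in>{1..N}. \<forall>x\<in>cached_points C m. W i x = W' i x) \<and>
           (\<forall>(S, a, b)\<in>groups r br z. \<forall>s<mu.
              transmission C ord d W S a b s = transmission C ord d W' S a b s)
           \<longrightarrow> (\<forall>x\<in>X. W (d m) x = W' (d m) x)"
proof (intro ballI allI impI)
  fix m W W' x
  assume m: "m \<in> users r br z"
    and H: "(\<forall>i\<in>{1..N}. \<forall>x\<in>cached_points C m. W i x = W' i x) \<and>
           (\<forall>(S, a, b)\<in>groups r br z. \<forall>s<mu.
              transmission C ord d W S a b s = transmission C ord d (W' :: nat \<Rightarrow> 'a \<Rightarrow> 'v) S a b s)"
    and x: "x \<in> X"
  obtain S u where mSu: "m = (S, u)" by (cases m)
  have S: "S \<subseteq> {..<r}" "card S = z" "u \<in> S \<rightarrow>\<^sub>E {..<br}" using m mSu by (auto simp: users_def)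
  have dm: "d m \<in> {1..N}" using demands m by auto
  have rd: "resolvable_design X C k r br" using crd by (simp add: cross_resolvable_design_def)
  have cache: "\<And>y v. (S, v) \<in> users r br z \<Longrightarrow> y \<in> cached_points C m \<Longrightarrow> W (d (S, v)) y = W' (d (S, v)) y"
    using H demands by blast
  show "W (d m) x = W' (d m) x"
  proof (cases "x \<in> cached_points C m")
    case True then show ?thesis using H dm by blast
  next
    case False
    hence notin: "\<And>j. j \<in> S \<Longrightarrow> x \<notin> C j (u j)" using mSu by (auto simp: cached_points_def)
    have ex: "\<And>j. j \<in> S \<Longrightarrow> \<exists>l<br. x \<in> C j l"
    proof -
      fix j assume "j \<in> S"
      hence "j < r" using S by auto
      hence "(\<Union>l<br. C j l) = X" using rd by (simp add: resolvable_design_def)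
      thus "\<exists>l<br. x \<in> C j l" using x by auto
    qed
    define l where "l = restrict (\<lambda>j. SOME l. l < br \<and> x \<in> C j l) S"
    have l: "\<And>j. j \<in> S \<Longrightarrow> l j < br \<and> x \<in> C j (l j)"
    proof -
      fix j assume j: "j \<in> S"
      have "\<exists>l. l < br \<and> x \<in> C j l" using ex[OF j] by blast
      hence "(SOME l. l < br \<and> x \<in> C j l) < br \<and> x \<in> C j (SOME l. l < br \<and> x \<in> C j l)" by (rule someI_ex)
      thus "l j < br \<and> x \<in> C j (l j)" using j by (simp add: l_def)
    qed
    have lE: "l \<in> S \<rightarrow>\<^sub>E {..<br}" using l by (auto simp: l_def)
    have lu: "\<And>j. j \<in> S \<Longrightarrow> u j \<noteq> l j" using l notin by metis
    have grp: "(S, u, l) \<in> groups r br z" using S lE lu by (auto simp: groups_def)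
    define G where "G = group_choices S u l"
    have uG: "u \<in> G" using S by (auto simp: G_def group_choices_def)
    have finG: "finite G" unfolding G_def group_choices_def
      using S(1) by (intro finite_PiE) (auto intro: finite_subset)
    have GU: "\<And>v. v \<in> G \<Longrightarrow> (S, v) \<in> users r br z"
      using S lE by (auto simp: G_def group_choices_def users_def PiE_iff)
    have cardf: "\<And>v. v \<in> G \<Longrightarrow> card (f_set C S u l v) = mu"
    proof -
      fix v assume v: "v \<in> G"
      let ?w = "\<lambda>j\<in>S. if v j = u j then l j else u j"
      have "?w \<in> S \<rightarrow>\<^sub>E {..<br}" using S lE by (auto simp: PiE_iff)
      hence "card (\<Inter>j\<in>S. C j (?w j)) = mu" using mu S unfolding mu_z_eq_def by blast
      moreover have "(\<Inter>j\<in>S. C j (?w j)) = f_set C S u l v" by (simp add: f_set_def)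
      ultimately show "card (f_set C S u l v) = mu" by simp
    qed
    have mu0: "mu > 0" using mu by (simp add: mu_z_eq_def)
    have finf: "\<And>v. v \<in> G \<Longrightarrow> finite (f_set C S u l v)" using cardf mu0 card_ge_0_finite by metis
    have xf: "x \<in> f_set C S u l u" using l by (simp add: f_set_def)
    have ou: "distinct (ord (f_set C S u l u)) \<and> set (ord (f_set C S u l u)) = f_set C S u l u"
      using ord finf uG by blast
    then obtain s where s: "s < length (ord (f_set C S u l u))" "ord (f_set C S u l u) ! s = x"
      using xf by (metis in_set_conv_nth)
    have len: "\<And>v. v \<in> G \<Longrightarrow> length (ord (f_set C S u l v)) = mu"
      using ord finf cardf by (metis distinct_card)
    have smu: "s < mu" using s len uG by metis
    have other: "\<And>v. v \<in> G - {u} \<Longrightarrow> W (d (S, v)) (ord (f_set C S u l v) ! s) = W' (d (S, v)) (ord (f_set C S u l v) ! s)"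
    proof -
      fix v assume v: "v \<in> G - {u}"
      have "v \<in> S \<rightarrow>\<^sub>E {..<br}" using GU v by (auto simp: users_def)
      then obtain j where j: "j \<in> S" "v j \<noteq> u j" using v S(3) by (metis DiffE PiE_ext singletonI)
      have "ord (f_set C S u l v) ! s \<in> f_set C S u l v"
        using ord finf len smu v by (metis DiffD1 nth_mem)
      hence "ord (f_set C S u l v) ! s \<in> C j (u j)" using j by (auto simp: f_set_def)
      hence "ord (f_set C S u l v) ! s \<in> cached_points C m" using j mSu by (auto simp: cached_points_def)
      thus "?thesis v" using cache GU v by blast
    qed
    have T: "transmission C ord d W S u l s = transmission C ord d W' S u l s"
      using H grp smu by blast
    have "transmission C ord d W S u l s = W (d (S,u)) x + (\<Sum>v\<in>G-{u}. W (d (S, v)) (ord (f_set C S u l v) ! s))"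
      unfolding transmission_def G_def[symmetric] using sum.remove[OF finG uG, of "\<lambda>v. W (d (S, v)) (ord (f_set C S u l v) ! s)"] s by simp
    moreover have "transmission C ord d W' S u l s = W' (d (S,u)) x + (\<Sum>v\<in>G-{u}. W' (d (S, v)) (ord (f_set C S u l v) ! s))"
      unfolding transmission_def G_def[symmetric] using sum.remove[OF finG uG, of "\<lambda>v. W' (d (S, v)) (ord (f_set C S u l v) ! s)"] s by simp
    moreover have "(\<Sum>v\<in>G-{u}. W (d (S, v)) (ord (f_set C S u l v) ! s)) = (\<Sum>v\<in>G-{u}. W' (d (S, v)) (ord (f_set C S u l v) ! s))"
      using other by (rule sum.cong[OF refl])
    ultimately show ?thesis using T mSu by simp
  qed
qed

end
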